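(* Let $N\ge1$, $k,m\in\mathbb{Z}$, and let $\varphi:\mathbb{H}\times\mathbb{C}\to\mathbb{C}$ transform like a Jacobi form of weight $k$ and index $m$ with respect to $\Gamma\ltimes\mathbb{Z}^2$ for a subgroup $\Gamma\subseteq\mathrm{SL}(2,\mathbb{Z})$. Define $\varphi_1(\tau,z)=\varphi(N\tau,z)$ when $\Gamma\in\{\Gamma^0(N),\Gamma^1(N)\}$, and $\varphi_2(\tau,z)=N^{-k/2}\tau^{-k}\mathbf{e}(-mz^2/(N\tau))\varphi(-\frac1{N\tau},\frac z{N\tau})$ when $\Gamma\in\{\Gamma_0(N),\Gamma_1(N)\}$. Then $\varphi_1|_{k,\frac mN}\gamma=\varphi_1$ for all $\gamma\in\Gamma_0(N)$ if $\Gamma=\Gamma^0(N)$ and for all $\gamma\in\Gamma_1(N)$ if $\Gamma=\Gamma^1(N)$; $\varphi_2|_{k,\frac mN}\gamma=\varphi_2$ for all $\gamma\in\Gamma$ (for $\Gamma\in\{\Gamma_0(N),\Gamma_1(N)\}$); and $\varphi_i|_{\frac mN}X=\varphi_i$ for all $X\in N\mathbb{Z}\times\mathbb{Z}$ ($i=1,2$, whenever defined).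
   Context: $\mathbf{e}(t)=e^{2\pi it}$. For $\gamma=\begin{pmatrix}a&b\\c&d\end{pmatrix}$ and real index $\mu_0$: $(\varphi|_{k,\mu_0}\gamma)(\tau,z)=(c\tau+d)^{-k}\mathbf{e}(-\mu_0\frac{cz^2}{c\tau+d})\varphi(\frac{a\tau+b}{c\tau+d},\frac z{c\tau+d})$; for $X=(\lambda,\mu)$: $(\varphi|_{\mu_0}X)(\tau,z)=\mathbf{e}(\mu_0(\lambda^2\tau+2\lambda z+\lambda\mu))\varphi(\tau,z+\lambda\tau+\mu)$. "Transforms like a Jacobi form of weight $k$, index $m$ w.r.t. $\Gamma\ltimes\mathbb{Z}^2$" means $\varphi|_{k,m}\gamma=\varphi$ for $\gamma\in\Gamma$ and $\varphi|_mX=\varphi$ for $X\in\mathbb{Z}^2$. $\Gamma_0(N)$: $c\equiv0\bmod N$; $\Gamma_1(N)$: $c\equiv0$, $a\equiv d\equiv1\bmod N$; $\Gamma^0(N)$: $b\equiv0\bmod N$; $\Gamma^1(N)$: $b\equiv0$, $a\equiv d\equiv1\bmod N$. *)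

theory Defs
  imports "HOL-Analysis.Analysis"
begin

definition ee :: "complex \<Rightarrow> complex" where
  "ee t = exp (2 * of_real pi * \<i> * t)"

text \<open>Matrices (a,b,c,d) in SL(2,Z) as integer quadruples.\<close>
type_synonym mat2 = "int \<times> int \<times> int \<times> int"
type_synonym jfun = "complex \<Rightarrow> complex \<Rightarrow> complex"

definition SL2Z :: "mat2 set" where
  "SL2Z = {(a,b,c,d). a*d - b*c = 1}"

definition Gamma_lo0 :: "int \<Rightarrow> mat2 set" where
  "Gamma_lo0 N = {(a,b,c,d). a*d - b*c = 1 \<and> N dvd c}"
definition Gamma_lo1 :: "int \<Rightarrow> mat2 set" where
  "Gamma_lo1 N = {(a,b,c,d). a*d - b*c = 1 \<and> N dvd c \<and> a mod N = 1 mod N \<and> d mod N = 1 mod N}"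
definition Gamma_up0 :: "int \<Rightarrow> mat2 set" where
  "Gamma_up0 N = {(a,b,c,d). a*d - b*c = 1 \<and> N dvd b}"
definition Gamma_up1 :: "int \<Rightarrow> mat2 set" where
  "Gamma_up1 N = {(a,b,c,d). a*d - b*c = 1 \<and> N dvd b \<and> a mod N = 1 mod N \<and> d mod N = 1 mod N}"

definition slash_mat :: "int \<Rightarrow> real \<Rightarrow> mat2 \<Rightarrow> jfun \<Rightarrow> jfun" where
  "slash_mat k mu0 g phi = (case g of (a,b,c,d) \<Rightarrow> (\<lambda>\<tau> z.
     (of_int c * \<tau> + of_int d) powi (-k)
     * ee (- of_real mu0 * of_int c * z^2 / (of_int c * \<tau> + of_int d))
     * phi ((of_int a * \<tau> + of_int b) / (of_int c * \<tau> + of_int d)) (z / (of_int c * \<tau> + of_int d))))"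

definition slash_heis :: "real \<Rightarrow> int \<times> int \<Rightarrow> jfun \<Rightarrow> jfun" where
  "slash_heis mu0 X phi = (case X of (l, m) \<Rightarrow> (\<lambda>\<tau> z.
     ee (of_real mu0 * (of_int l ^ 2 * \<tau> + 2 * of_int l * z + of_int l * of_int m))
     * phi \<tau> (z + of_int l * \<tau> + of_int m)))"

text \<open>Transforms like a Jacobi form of weight k, index m w.r.t. Gamma \<ltimes> Z^2
  (phi is defined on H x C, so the identities are required for Im tau > 0).\<close>
definition jacobi_like :: "int \<Rightarrow> real \<Rightarrow> mat2 set \<Rightarrow> jfun \<Rightarrow> bool" where
  "jacobi_like k m G phi \<longleftrightarrow>
     (\<forall>g\<in>G. \<forall>\<tau> z. Im \<tau> > 0 \<longrightarrow> slash_mat k m g phi \<tau> z = phi \<tau> z) \<and>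
     (\<forall>X::int\<times>int. \<forall>\<tau> z. Im \<tau> > 0 \<longrightarrow> slash_heis m X phi \<tau> z = phi \<tau> z)"

end

theory Submission imports Defs begin

lemma ee_add: "ee (a + b) = ee a * ee b"
  by (simp add: ee_def distrib_left exp_add)

lemma lin_nz:
  fixes \<tau> :: complex
  assumes "Im \<tau> > 0" "x \<noteq> 0 \<or> y \<noteq> 0"
  shows "of_int x * \<tau> + of_int y \<noteq> 0"
proof
  assume h: "of_int x * \<tau> + of_int y = 0"
  hence "Im (of_int x * \<tau> + of_int y) = 0" by simp
  hence "x = 0" using assms(1) by simp
  with h assms(2) show False by simp
qed

lemma up_to_lo:
  fixes N :: int and phi :: jfun
  assumes N: "N \<ge> 1" and t: "Im \<tau> > 0"
    and H: "\<And>\<tau> z. Im \<tau> > 0 \<Longrightarrow> slash_mat k (of_int m) (a, N*b, c, d) phi \<tau> z = phi \<tau> z"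
  shows "slash_mat k (m / N) (a, b, N*c, d) (\<lambda>\<tau> z. phi (of_int N * \<tau>) z) \<tau> z = phi (of_int N * \<tau>) z"
proof -
  have Nt: "Im (of_int N * \<tau>) > 0" using N t by simp
  have N0: "(of_int N :: complex) \<noteq> 0" using N by simp
  have e1: "of_int (N*c) * \<tau> + of_int d = of_int c * (of_int N * \<tau>) + (of_int d :: complex)" by simp
  have e2: "of_int N * ((of_int a * \<tau> + of_int b) / (of_int c * (of_int N * \<tau>) + of_int d))
     = (of_int a * (of_int N * \<tau>) + of_int (N*b)) / (of_int c * (of_int N * \<tau>) + (of_int d :: complex))"
    by (simp add: algebra_simps)
  have e3: "- complex_of_real (real_of_int m / real_of_int N) * of_int (N * c) = - complex_of_real (of_int m) * of_int c"
    using N0 by simp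
  show ?thesis
    using H[OF Nt, of z] unfolding slash_mat_def
    by (simp only: prod.case e1 e2 e3)
qed

lemma heis1:
  fixes N :: int and phi :: jfun
  assumes N: "N \<ge> 1" and t: "Im \<tau> > 0"
    and H: "\<And>\<tau> z. Im \<tau> > 0 \<Longrightarrow> slash_heis (of_int m) (l, j) phi \<tau> z = phi \<tau> z"
  shows "slash_heis (m / N) (N*l, j) (\<lambda>\<tau> z. phi (of_int N * \<tau>) z) \<tau> z = phi (of_int N * \<tau>) z"
proof -
  have Nt: "Im (of_int N * \<tau>) > 0" using N t by simp
  have N0: "(of_int N :: complex) \<noteq> 0" using N by simp
  have e1: "complex_of_real (real_of_int m / real_of_int N) *
      ((of_int (N * l))\<^sup>2 * \<tau> + 2 * of_int (N * l) * z + of_int (N * l) * of_int j)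
     = complex_of_real (of_int m) * ((of_int l)\<^sup>2 * (of_int N * \<tau>) + 2 * of_int l * z + of_int l * of_int j)"
    using N0 by (simp add: field_simps power2_eq_square)
  have e2: "z + of_int (N * l) * \<tau> + of_int j = z + of_int l * (of_int N * \<tau>) + (of_int j :: complex)"
    by simp
  show ?thesis using H[OF Nt, of z] unfolding slash_heis_def
    by (simp only: prod.case e1 e2)
qed

lemma EE_gen:
  fixes J A t n c b a m z :: complex
  assumes "J \<noteq> 0" "A \<noteq> 0" "t \<noteq> 0" "n \<noteq> 0"
    and k1: "n*c*A + 1 = a*J" and k2: "A - b = a*t"
  shows "(- (m / n) * (n*c) * z^2 / J) + (- m * (z / J)^2 / (n * (A / J)))
    = (- m * z^2 / (n * t)) + (- m * (- (n*b)) * (z / (n*t))^2 / (A / t))"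
proof -
  have "(- (m / n) * (n*c) * z^2 / J) + (- m * (z / J)^2 / (n * (A / J))) = - m * z^2 * (n*c*A + 1) / (n*J*A)"
    using assms(1-4) by (simp add: field_simps power2_eq_square)
  also have "\<dots> = - m * z^2 * (a*J) / (n*J*A)" by (simp only: k1)
  also have "\<dots> = - m * a * z^2 / (n * A)" using assms(1-4) by (simp add: field_simps power2_eq_square)
  also have "\<dots> = - m * z^2 * (a * t) / (n * t * A)" using assms(1-4) by (simp add: field_simps power2_eq_square)
  also have "\<dots> = - m * z^2 * (A - b) / (n * t * A)" by (simp only: k2)
  also have "\<dots> = (- m * z^2 / (n * t)) + (- m * (- (n*b)) * (z / (n*t))^2 / (A / t))"
    using assms(1-4) by (simp add: field_simps power2_eq_square)
  finally show ?thesis .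
qed

lemma rearr:
  fixes e1 e2 e3 e4 j x t h nk p :: complex
  assumes "e1*e2 = e3*e4" "j*x = t*h"
  shows "j*e1*(nk*x*e2*p) = nk*t*e3*(h*e4*p)"
proof -
  have "j*e1*(nk*x*e2*p) = nk*(j*x)*(e1*e2)*p" by (simp only: ac_simps)
  also have "\<dots> = nk*(t*h)*(e3*e4)*p" by (simp only: assms)
  also have "\<dots> = nk*t*e3*(h*e4*p)" by (simp only: ac_simps)
  finally show ?thesis .
qed

lemma lo_mat:
  fixes N :: int and phi :: jfun
  assumes N: "N \<ge> 1" and t: "Im \<tau> > 0" and det: "a*d - b*(N*c) = 1"
    and H: "\<And>\<tau> z. Im \<tau> > 0 \<Longrightarrow> slash_mat k (of_int m) (d, -c, -(N*b), a) phi \<tau> z = phi \<tau> z"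
  defines "phi2 \<equiv> (\<lambda>\<tau> z. of_real (real_of_int N powr (- real_of_int k / 2)) * \<tau> powi (-k)
             * ee (- of_int m * z^2 / (of_int N * \<tau>))
             * phi (- 1 / (of_int N * \<tau>)) (z / (of_int N * \<tau>)))"
  shows "slash_mat k (m / N) (a, b, N*c, d) phi2 \<tau> z = phi2 \<tau> z"
proof -
  define J where "J = of_int (N*c) * \<tau> + (of_int d :: complex)"
  define A where "A = of_int a * \<tau> + (of_int b :: complex)"
  define w where "w = - 1 / (of_int N * \<tau>)"
  define u where "u = z / (of_int N * \<tau>)"
  define Hh where "Hh = of_int (-(N*b)) * w + (of_int a :: complex)"
  define nk where "nk = complex_of_real (real_of_int N powr (- real_of_int k / 2))"
  have N0: "(of_int N :: complex) \<noteq> 0" using N by simp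
  have t0: "\<tau> \<noteq> 0" using t by auto
  have J0: "J \<noteq> 0" unfolding J_def using det by (intro lin_nz[OF t]) auto
  have A0: "A \<noteq> 0" unfolding A_def using det by (intro lin_nz[OF t]) auto
  have wI: "Im w > 0"
  proof -
    have "w = - cnj \<tau> / (of_int N * (norm \<tau>)^2)"
      unfolding w_def using t0 N0
      by (simp add: field_simps complex_norm_square[symmetric] of_real_power)
    hence "Im w = Im \<tau> / (of_int N * (norm \<tau>)^2)"
      by (simp add: Im_divide_of_real[of _ "of_int N * (norm \<tau>)^2", simplified] )
    thus ?thesis using t t0 N by simp
  qed
  have hp: "phi w u = Hh powi (-k) * ee (- complex_of_real (of_int m) * of_int (-(N*b)) * u^2 / Hh)
      * phi ((of_int d * w + of_int (-c)) / Hh) (u / Hh)"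
    using H[OF wI, of u] unfolding slash_mat_def Hh_def by simp
  have HhA: "Hh = A / \<tau>" unfolding Hh_def w_def A_def using t0 N0 by (simp add: field_simps)
  have Hh0: "Hh \<noteq> 0" using HhA A0 t0 by simp
  have P1: "- 1 / (of_int N * (A / J)) = (of_int d * w + of_int (-c)) / Hh"
    unfolding HhA using t0 N0 J0 A0 unfolding w_def J_def by (simp add: field_simps)
  have Q1: "(z / J) / (of_int N * (A / J)) = u / Hh"
    unfolding HhA using t0 N0 J0 A0 unfolding u_def by (simp add: field_simps)
  have PW: "J powi (-k) * (A / J) powi (-k) = \<tau> powi (-k) * Hh powi (-k)"
  proof -
    have "J powi (-k) * (A / J) powi (-k) = (J * (A / J)) powi (-k)" by (simp only: power_int_mult_distrib)
    also have "J * (A / J) = \<tau> * Hh" using J0 t0 HhA by simp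
    finally show ?thesis by (simp add: power_int_mult_distrib)
  qed
  have EE: "(- complex_of_real (real_of_int m / real_of_int N) * of_int (N*c) * z^2 / J)
      + (- of_int m * (z / J)^2 / (of_int N * (A / J)))
      = (- of_int m * z^2 / (of_int N * \<tau>))
      + (- complex_of_real (of_int m) * of_int (-(N*b)) * u^2 / Hh)"
  proof -
    have det': "of_int a * of_int d - of_int b * (of_int N * of_int c) = (1::complex)"
      using arg_cong[OF det, of "of_int :: int \<Rightarrow> complex"] by simp
    have k1: "of_int N * of_int c * A + 1 = of_int a * J"
      unfolding A_def J_def using det' by (simp add: algebra_simps)
    have k2: "A - of_int b = of_int a * \<tau>" unfolding A_def by simp
    show ?thesis
      using EE_gen[OF J0 A0 t0 N0 k1 k2, of "of_int m" z] unfolding HhA u_def by simp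
  qed
  have L: "slash_mat k (m / N) (a, b, N*c, d) phi2 \<tau> z
     = J powi (-k) * ee (- complex_of_real (real_of_int m / real_of_int N) * of_int (N*c) * z^2 / J)
       * (nk * (A / J) powi (-k) * ee (- of_int m * (z / J)^2 / (of_int N * (A / J)))
          * phi (- 1 / (of_int N * (A / J))) ((z / J) / (of_int N * (A / J))))"
    by (simp only: slash_mat_def phi2_def prod.case J_def A_def nk_def)
  have R: "phi2 \<tau> z = nk * \<tau> powi (-k) * ee (- of_int m * z^2 / (of_int N * \<tau>)) * phi w u"
    unfolding phi2_def nk_def w_def u_def by simp
  show ?thesis unfolding L R hp P1 Q1
  proof -
    let ?e1 = "ee (- complex_of_real (real_of_int m / real_of_int N) * of_int (N*c) * z^2 / J)"
    let ?e2 = "ee (- of_int m * (z / J)^2 / (of_int N * (A / J)))"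
    let ?e3 = "ee (- of_int m * z^2 / (of_int N * \<tau>))"
    let ?e4 = "ee (- complex_of_real (of_int m) * of_int (-(N*b)) * u^2 / Hh)"
    have "?e1 * ?e2 = ?e3 * ?e4" using EE by (metis ee_add)
    thus "J powi - k * ?e1 * (nk * (A / J) powi - k * ?e2 * phi ((of_int d * w + of_int (- c)) / Hh) (u / Hh)) =
    nk * \<tau> powi - k * ?e3 * (Hh powi - k * ?e4 * phi ((of_int d * w + of_int (- c)) / Hh) (u / Hh))"
      using PW by (rule rearr)
  qed
qed

lemma heis2:
  fixes N k :: int and phi :: jfun
  assumes N: "N \<ge> 1" and t: "Im \<tau> > 0"
    and H: "\<And>\<tau> z. Im \<tau> > 0 \<Longrightarrow> slash_heis (of_int m) (-j, l) phi \<tau> z = phi \<tau> z"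
  defines "phi2 \<equiv> (\<lambda>\<tau> z. of_real (real_of_int N powr (- real_of_int k / 2)) * \<tau> powi (-k)
             * ee (- of_int m * z^2 / (of_int N * \<tau>))
             * phi (- 1 / (of_int N * \<tau>)) (z / (of_int N * \<tau>)))"
  shows "slash_heis (m / N) (N*l, j) phi2 \<tau> z = phi2 \<tau> z"
proof -
  define w where "w = - 1 / (of_int N * \<tau>)"
  define u where "u = z / (of_int N * \<tau>)"
  define nk where "nk = complex_of_real (real_of_int N powr (- real_of_int k / 2))"
  define z' where "z' = z + of_int (N*l) * \<tau> + of_int j"
  have N0: "(of_int N :: complex) \<noteq> 0" using N by simp
  have t0: "\<tau> \<noteq> 0" using t by auto
  have wI: "Im w > 0"
  proof -
    have "w = - cnj \<tau> / (of_int N * (norm \<tau>)^2)"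
      unfolding w_def using t0 N0
      by (simp add: field_simps complex_norm_square[symmetric] of_real_power)
    hence "Im w = Im \<tau> / (of_int N * (norm \<tau>)^2)"
      by (simp add: Im_divide_of_real[of _ "of_int N * (norm \<tau>)^2", simplified] )
    thus ?thesis using t t0 N by simp
  qed
  have hp: "phi w u = ee (complex_of_real (of_int m) * ((of_int (-j))^2 * w + 2 * of_int (-j) * u + of_int (-j) * of_int l))
      * phi w (u + of_int (-j) * w + of_int l)"
    using H[OF wI, of u] unfolding slash_heis_def by simp
  have Q: "z' / (of_int N * \<tau>) = u + of_int (-j) * w + of_int l"
    unfolding z'_def u_def w_def using N0 t0 by (simp add: field_simps)
  have EE: "complex_of_real (real_of_int m / real_of_int N) * ((of_int (N*l))^2 * \<tau> + 2 * of_int (N*l) * z + of_int (N*l) * of_int j)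
      + (- of_int m * z'^2 / (of_int N * \<tau>))
      = (- of_int m * z^2 / (of_int N * \<tau>)) + 
        complex_of_real (of_int m) * ((of_int (-j))^2 * w + 2 * of_int (-j) * u + of_int (-j) * of_int l)"
    unfolding z'_def u_def w_def using N0 t0 by (simp add: field_simps power2_eq_square)
  have L: "slash_heis (m / N) (N*l, j) phi2 \<tau> z =
     ee (complex_of_real (real_of_int m / real_of_int N) * ((of_int (N*l))^2 * \<tau> + 2 * of_int (N*l) * z + of_int (N*l) * of_int j))
     * (nk * \<tau> powi (-k) * ee (- of_int m * z'^2 / (of_int N * \<tau>)) * phi w (z' / (of_int N * \<tau>)))"
    by (simp only: slash_heis_def phi2_def prod.case z'_def w_def nk_def)
  have R: "phi2 \<tau> z = nk * \<tau> powi (-k) * ee (- of_int m * z^2 / (of_int N * \<tau>)) * phi w u"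
    unfolding phi2_def nk_def w_def u_def by simp
  have R2: "\<And>e0 e1 e2 eh nk t p :: complex. e0*e1 = e2*eh \<Longrightarrow> e0*(nk*t*e1*p) = nk*t*e2*(eh*p)"
  proof -
    fix e0 e1 e2 eh nk t p :: complex assume a: "e0*e1 = e2*eh"
    have "e0*(nk*t*e1*p) = nk*t*(e0*e1)*p" by (simp only: ac_simps)
    also have "\<dots> = nk*t*(e2*eh)*p" by (simp only: a)
    also have "\<dots> = nk*t*e2*(eh*p)" by (simp only: ac_simps)
    finally show "e0*(nk*t*e1*p) = nk*t*e2*(eh*p)" .
  qed
  show ?thesis unfolding L R hp Q
    by (rule R2) (use EE in \<open>metis ee_add\<close>)
qed

theorem proposition4p1:
  fixes N k m :: int and phi :: "complex \<Rightarrow> complex \<Rightarrow> complex"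
  assumes "N \<ge> 1"
  defines "phi1 \<equiv> (\<lambda>\<tau> z. phi (of_int N * \<tau>) z)"
  defines "phi2 \<equiv> (\<lambda>\<tau> z. of_real (real_of_int N powr (- real_of_int k / 2)) * \<tau> powi (-k)
             * ee (- of_int m * z^2 / (of_int N * \<tau>))
             * phi (- 1 / (of_int N * \<tau>)) (z / (of_int N * \<tau>)))"
  shows
   "(jacobi_like k (of_int m) (Gamma_up0 N) phi \<longrightarrow>
       (\<forall>g\<in>Gamma_lo0 N. \<forall>\<tau> z. Im \<tau> > 0 \<longrightarrow> slash_mat k (m / N) g phi1 \<tau> z = phi1 \<tau> z) \<and>
       (\<forall>l j. \<forall>\<tau> z. Im \<tau> > 0 \<longrightarrow> slash_heis (m / N) (N * l, j) phi1 \<tau> z = phi1 \<tau> z)) \<and>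
    (jacobi_like k (of_int m) (Gamma_up1 N) phi \<longrightarrow>
       (\<forall>g\<in>Gamma_lo1 N. \<forall>\<tau> z. Im \<tau> > 0 \<longrightarrow> slash_mat k (m / N) g phi1 \<tau> z = phi1 \<tau> z) \<and>
       (\<forall>l j. \<forall>\<tau> z. Im \<tau> > 0 \<longrightarrow> slash_heis (m / N) (N * l, j) phi1 \<tau> z = phi1 \<tau> z)) \<and>
    (jacobi_like k (of_int m) (Gamma_lo0 N) phi \<longrightarrow>
       (\<forall>g\<in>Gamma_lo0 N. \<forall>\<tau> z. Im \<tau> > 0 \<longrightarrow> slash_mat k (m / N) g phi2 \<tau> z = phi2 \<tau> z) \<and>
       (\<forall>l j. \<forall>\<tau> z. Im \<tau> > 0 \<longrightarrow> slash_heis (m / N) (N * l, j) phi2 \<tau> z = phi2 \<tau> z)) \<and>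
    (jacobi_like k (of_int m) (Gamma_lo1 N) phi \<longrightarrow>
       (\<forall>g\<in>Gamma_lo1 N. \<forall>\<tau> z. Im \<tau> > 0 \<longrightarrow> slash_mat k (m / N) g phi2 \<tau> z = phi2 \<tau> z) \<and>
       (\<forall>l j. \<forall>\<tau> z. Im \<tau> > 0 \<longrightarrow> slash_heis (m / N) (N * l, j) phi2 \<tau> z = phi2 \<tau> z))"
  proof -
  have A1: "(\<forall>g\<in>G2. \<forall>\<tau> z. Im \<tau> > 0 \<longrightarrow> slash_mat k (m / N) g phi1 \<tau> z = phi1 \<tau> z) \<and>
       (\<forall>l j. \<forall>\<tau> z. Im \<tau> > 0 \<longrightarrow> slash_heis (m / N) (N * l, j) phi1 \<tau> z = phi1 \<tau> z)"
    if J: "jacobi_like k (of_int m) G1 phi"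
      and G: "\<And>a b c d. (a,b,N*c,d) \<in> G2 \<Longrightarrow> (a, N*b, c, d) \<in> G1"
      and Gd: "\<And>a b c d. (a,b,c,d) \<in> G2 \<Longrightarrow> N dvd c" for G1 G2
  proof (intro conjI ballI allI impI)
    fix g \<tau> z assume g: "g \<in> G2" and t: "Im \<tau> > 0"
    obtain a b c d where gd: "g = (a,b,c,d)" by (cases g) auto
    obtain c' where c: "c = N*c'" using Gd g gd by (meson dvdE)
    have "(a, N*b, c', d) \<in> G1" using G g gd c by simp
    with J have H: "\<And>\<tau> z. Im \<tau> > 0 \<Longrightarrow> slash_mat k (of_int m) (a, N*b, c', d) phi \<tau> z = phi \<tau> z"
      unfolding jacobi_like_def by blast
    show "slash_mat k (m / N) g phi1 \<tau> z = phi1 \<tau> z"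
      unfolding gd c phi1_def using up_to_lo[OF assms(1) t H] by blast
  next
    fix l j \<tau> z assume t: "Im \<tau> > 0"
    have H: "\<And>\<tau> z. Im \<tau> > 0 \<Longrightarrow> slash_heis (of_int m) (l, j) phi \<tau> z = phi \<tau> z"
      using J unfolding jacobi_like_def by blast
    show "slash_heis (m / N) (N * l, j) phi1 \<tau> z = phi1 \<tau> z"
      unfolding phi1_def using heis1[OF assms(1) t H] by blast
  qed
  have A2: "(\<forall>g\<in>G. \<forall>\<tau> z. Im \<tau> > 0 \<longrightarrow> slash_mat k (m / N) g phi2 \<tau> z = phi2 \<tau> z) \<and>
       (\<forall>l j. \<forall>\<tau> z. Im \<tau> > 0 \<longrightarrow> slash_heis (m / N) (N * l, j) phi2 \<tau> z = phi2 \<tau> z)"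
    if J: "jacobi_like k (of_int m) G phi"
      and G: "\<And>a b c d. (a,b,N*c,d) \<in> G \<Longrightarrow> (d, -c, -(N*b), a) \<in> G"
      and Gd: "\<And>a b c d. (a,b,c,d) \<in> G \<Longrightarrow> N dvd c \<and> a*d - b*c = 1" for G
  proof (intro conjI ballI allI impI)
    fix g \<tau> z assume g: "g \<in> G" and t: "Im \<tau> > 0"
    obtain a b c d where gd: "g = (a,b,c,d)" by (cases g) auto
    obtain c' where c: "c = N*c'" using Gd g gd by (meson dvdE)
    have det: "a*d - b*(N*c') = 1" using Gd g gd c by simp
    have "(d, -c', -(N*b), a) \<in> G" using G g gd c by simp
    with J have H: "\<And>\<tau> z. Im \<tau> > 0 \<Longrightarrow> slash_mat k (of_int m) (d, -c', -(N*b), a) phi \<tau> z = phi \<tau> z"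
      unfolding jacobi_like_def by blast
    show "slash_mat k (m / N) g phi2 \<tau> z = phi2 \<tau> z"
      unfolding gd c phi2_def using lo_mat[OF assms(1) t det H] by blast
  next
    fix l j \<tau> z assume t: "Im \<tau> > 0"
    have H: "\<And>\<tau> z. Im \<tau> > 0 \<Longrightarrow> slash_heis (of_int m) (-j, l) phi \<tau> z = phi \<tau> z"
      using J unfolding jacobi_like_def by blast
    show "slash_heis (m / N) (N * l, j) phi2 \<tau> z = phi2 \<tau> z"
      unfolding phi2_def using heis2[OF assms(1) t H] by blast
  qed
  show ?thesis
    apply (rule conjI, rule impI)
     apply (rule A1, assumption, auto simp: Gamma_up0_def Gamma_lo0_def algebra_simps)[1]
    apply (rule conjI, rule impI)
     apply (rule A1, assumption, auto simp: Gamma_up1_def Gamma_lo1_def algebra_simps)[1]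
    apply (rule conjI, rule impI)
     apply (rule A2, assumption, auto simp: Gamma_lo0_def algebra_simps)[1]
    apply (rule impI)
    apply (rule A2, assumption, auto simp: Gamma_lo1_def algebra_simps)[1]
    done
qed

end
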